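(* Let $N\ge1$ and $T=1$, and let $q$ be the normalized polynomial defined in the context. Then $$q(z)=2\tan\frac{\pi}{2(N+1)}\sum_{j=1}^{N}\Bigl(1-\frac{j}{N+1}\Bigr)\sin\frac{\pi j}{N+1}\,z^{j-1},$$ and $q(-1)=\tan^2\frac{\pi}{2(N+1)}$.
   Context: Fix integers $T\ge 1$, $N\ge1$. Set $\psi_j=\dfrac{\pi(2+T(2j-1))}{2+(N-1)T}$. Define $\eta(z)=z(z+1)\prod_{j=1}^{\frac{N-2}{2}}(z-e^{i\psi_j})(z-e^{-i\psi_j})$ if $N$ is even, and $\eta(z)=z\prod_{j=1}^{\frac{N-1}{2}}(z-e^{i\psi_j})(z-e^{-i\psi_j})$ if $N$ is odd (empty products equal $1$). Let $$q(z)=\frac{KT}{2+(N-1)T}\left(\Bigl(\frac1T+N\Bigr)\frac{\eta(z)}{z}-\eta'(z)\right),$$ where the constant $K$ is chosen so that $q(1)=1$. *)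

theory Defs
  imports "HOL-Analysis.Analysis" "HOL-Computational_Algebra.Polynomial"
begin

definition psi :: "nat \<Rightarrow> nat \<Rightarrow> nat \<Rightarrow> real" where
  "psi T N j = pi * (2 + real T * (2 * real j - 1)) / (2 + (real N - 1) * real T)"

definition eta_poly :: "nat \<Rightarrow> nat \<Rightarrow> complex poly" where
  "eta_poly T N =
     (if even N then
        [:0, 1:] * [:1, 1:] *
        (\<Prod>j\<in>{1..(N - 2) div 2}. [:- cis (psi T N j), 1:] * [:- cis (- psi T N j), 1:])
      else
        [:0, 1:] *
        (\<Prod>j\<in>{1..(N - 1) div 2}. [:- cis (psi T N j), 1:] * [:- cis (- psi T N j), 1:]))"

text \<open>Unnormalised bracket: (1/T + N) eta(z)/z - eta'(z). eta(z)/z is exact polynomial division by z.\<close>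
definition q_bracket :: "nat \<Rightarrow> nat \<Rightarrow> complex poly" where
  "q_bracket T N =
     smult (complex_of_real (1 / real T + real N)) (eta_poly T N div [:0, 1:]) - pderiv (eta_poly T N)"

text \<open>The constant K chosen so that q(1) = 1.\<close>
definition K_const :: "nat \<Rightarrow> nat \<Rightarrow> complex" where
  "K_const T N = complex_of_real (2 + (real N - 1) * real T) / (complex_of_real (real T) * poly (q_bracket T N) 1)"

definition q_poly :: "nat \<Rightarrow> nat \<Rightarrow> complex poly" where
  "q_poly T N = smult (K_const T N * complex_of_real (real T / (2 + (real N - 1) * real T))) (q_bracket T N)"

end

theory Submission imports Defs begin

definition th :: "nat \<Rightarrow> real" where "th N = pi / (real N + 1)"
definition uu :: "nat \<Rightarrow> nat \<Rightarrow> complex" where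
  "uu N k = complex_of_real (sin (real (Suc k) * th N) / sin (th N))"
definition PP :: "nat \<Rightarrow> complex poly" where "PP N = (\<Sum>k<N. monom (uu N k) k)"
definition DD :: "nat \<Rightarrow> complex poly" where "DD N = [:-cis (th N),1:]*[:-cis(-th N),1:]"
definition QQ :: "nat \<Rightarrow> complex poly" where
  "QQ N = (if even N then [:1,1:] else 1) *
     (\<Prod>j\<in>{1..(N-1) div 2}. [:- cis (psi 1 N j), 1:] * [:- cis (- psi 1 N j), 1:])"
definition om :: "nat \<Rightarrow> nat \<Rightarrow> complex" where "om N k = cis (pi*(2*real k+1)/(real N+1))"

lemma psi1: "psi 1 N j = pi*(2*real j+1)/(real N+1)"
  unfolding psi_def by (simp add: algebra_simps)

lemma eta_eq: "eta_poly 1 N = [:0,1:] * QQ N"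
proof (cases "even N")
  case True
  then have "(N-2) div 2 = (N-1) div 2" by presburger
  then show ?thesis using True unfolding eta_poly_def QQ_def by (simp add: mult.assoc)
next
  case False
  then show ?thesis unfolding eta_poly_def QQ_def by simp
qed

lemma th_bounds: assumes "N \<ge> 1" shows "0 < th N" "th N \<le> pi/2"
proof -
  show "0 < th N" unfolding th_def by simp
  have "real N + 1 \<ge> 2" using assms by simp
  then show "th N \<le> pi/2" unfolding th_def using pi_gt_zero
    by (simp add: divide_simps)
qed

lemma sin_th_pos: "N \<ge> 1 \<Longrightarrow> sin (th N) > 0"
  using th_bounds[of N] by (intro sin_gt_zero) (auto simp: pi_gt_zero)

lemma cos_th_lt1: "N \<ge> 1 \<Longrightarrow> cos (th N) < 1"
  using th_bounds[of N] cos_monotone_0_pi[of 0 "th N"] by auto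

lemma cos_th_pos: "N \<ge> 1 \<Longrightarrow> cos (th N) > -1"
  using th_bounds[of N] by (smt (verit) cos_ge_zero pi_gt_zero)

lemma poly_DD: "poly (DD N) z = z^2 - 2 * complex_of_real (cos (th N)) * z + 1"
proof -
  have a: "cis (th N) + cis (- th N) = 2 * complex_of_real (cos (th N))"
    by (simp add: complex_eq_iff)
  have b: "cis (th N) * cis (- th N) = 1" by (simp add: cis_mult)
  show ?thesis unfolding DD_def using a b
    by (simp add: algebra_simps power2_eq_square)
qed


lemma uu_rec: "uu N (Suc (Suc n)) = 2 * complex_of_real (cos (th N)) * uu N (Suc n) - uu N n"
proof -
  define a where "a = real (Suc (Suc n)) * th N"
  have e1: "real (Suc (Suc (Suc n))) * th N = a + th N" unfolding a_def by (simp add: algebra_simps)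
  have e2: "real (Suc n) * th N = a - th N" unfolding a_def by (simp add: algebra_simps)
  have "sin (a + th N) = 2 * cos (th N) * sin a - sin (a - th N)"
    by (simp add: sin_add sin_diff)
  then have "sin (real (Suc (Suc (Suc n))) * th N) / sin (th N) =
     2 * cos (th N) * (sin (real (Suc (Suc n)) * th N) / sin (th N)) - sin (real (Suc n) * th N) / sin (th N)"
    unfolding e1 e2 a_def[symmetric] by (simp add: diff_divide_distrib)
  then show ?thesis unfolding uu_def
    by (simp only: of_real_diff of_real_mult of_real_numeral)
qed

lemma uu0: "N \<ge> 1 \<Longrightarrow> uu N 0 = 1"
  using sin_th_pos[of N] by (simp add: uu_def)

lemma uu1: "N \<ge> 1 \<Longrightarrow> uu N 1 = 2 * complex_of_real (cos (th N))"
  using sin_th_pos[of N] by (simp add: uu_def sin_double)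

lemma cheb:
  assumes "N \<ge> 1" "n \<ge> 1"
  shows "poly (DD N) z * (\<Sum>k<n. uu N k * z^k) = 1 - uu N n * z^n + uu N (n-1) * z^(n+1)"
  using assms(2)
proof (induction n rule: dec_induct)
  case base
  then show ?case using uu0[OF assms(1)] uu1[OF assms(1)]
    by (simp add: poly_DD power2_eq_square algebra_simps)
next
  case (step n)
  then obtain m where m: "n = Suc m" by (cases n) auto
  have "poly (DD N) z * (\<Sum>k<Suc n. uu N k * z^k) =
     (1 - uu N n * z^n + uu N (n-1) * z^(n+1)) + poly (DD N) z * (uu N n * z^n)"
    using step.IH by (simp add: algebra_simps)
  also have "\<dots> = 1 - uu N (Suc n) * z ^ Suc n + uu N n * z ^ (Suc n + 1)"
  proof -
    show ?thesis unfolding poly_DD m uu_rec by (simp add: power2_eq_square power_Suc algebra_simps)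
  qed
  finally show ?case by simp
qed


lemma uuN: "uu N N = 0"
proof -
  have "real (Suc N) * th N = pi" unfolding th_def by (simp add: field_simps)
  then show ?thesis unfolding uu_def by simp
qed

lemma uuN1: "N \<ge> 1 \<Longrightarrow> uu N (N-1) = 1"
proof -
  assume N: "N \<ge> 1"
  have "real (Suc (N-1)) * th N = pi - th N" using N unfolding th_def by (simp add: field_simps)
  then show ?thesis using sin_th_pos[OF N] unfolding uu_def by simp
qed

lemma poly_PP: "poly (PP N) z = (\<Sum>k<N. uu N k * z^k)"
  unfolding PP_def by (simp add: poly_sum poly_monom)

lemma DD_PP: assumes "N \<ge> 1" shows "DD N * PP N = monom 1 (N+1) + 1"
proof -
  have "poly (DD N * PP N) = poly (monom 1 (N+1) + 1)"
  proof
    fix z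
    show "poly (DD N * PP N) z = poly (monom 1 (N+1) + 1) z"
      using cheb[OF assms assms, of z] uuN[of N] uuN1[OF assms] assms
      by (simp add: poly_PP poly_monom)
  qed
  then show ?thesis by (simp add: poly_eq_poly_eq_iff)
qed


lemma cis_shift: "cis (2*pi*real (j::nat) + x) = cis x"
proof -
  have "cis (2*pi*real j + x) = cis (2*pi*real j) * cis x" by (rule cis_mult[symmetric])
  also have "cis (2*pi*real j) = 1" by (rule cis_multiple_2pi) simp
  finally show ?thesis by simp
qed

lemma om_pow: "om N k ^ (N+1) = -1"
proof -
  have "om N k ^ (N+1) = cis (real (N+1) * (pi*(2*real k+1)/(real N+1)))"
    unfolding om_def by (rule Complex.DeMoivre)
  also have "real (N+1) * (pi*(2*real k+1)/(real N+1)) = 2*pi*real k + pi"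
    by (simp add: field_simps)
  also have "cis \<dots> = -1" by (simp add: cis_shift)
  finally show ?thesis .
qed

lemma cis_inj:
  assumes "0 \<le> a" "a < 2*pi" "0 \<le> b" "b < 2*pi" "cis a = cis b"
  shows "a = b"
proof -
  have "exp (\<i> * complex_of_real a) = exp (\<i> * complex_of_real b)"
    using assms(5) by (simp add: cis_conv_exp)
  then obtain n :: int where n: "\<i> * complex_of_real a = \<i> * complex_of_real b + (of_int (2 * n) * pi) * \<i>"
    by (auto simp: exp_eq)
  then have "\<i> * complex_of_real a = \<i> * complex_of_real (b + 2 * of_int n * pi)"
    by (simp add: algebra_simps)
  then have "complex_of_real a = complex_of_real (b + 2 * of_int n * pi)"
    by simp
  then have e: "a = b + 2 * of_int n * pi" using of_real_eq_iff by blast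
  have "\<bar>2 * of_int n * pi\<bar> < 2 * pi" using e assms by linarith
  then have "\<bar>of_int n\<bar> * (2*pi) < 1 * (2*pi)" by (simp add: abs_mult)
  then have "\<bar>(of_int n::real)\<bar> < 1" using pi_gt_zero by (simp only: mult_less_cancel_right)
  then have "n = 0" by linarith
  then show ?thesis using e by simp
qed

lemma om_inj: "inj_on (om N) {..<N+1}"
proof (rule inj_onI)
  fix a b assume a: "a \<in> {..<N+1}" and b: "b \<in> {..<N+1}" and e: "om N a = om N b"
  have bd: "pi*(2*real k+1)/(real N+1) < 2*pi" if "k < N+1" for k
  proof -
    have "2*real k+1 < 2*(real N+1)" using that by (simp add: less_Suc_eq_le)
    then have "pi*(2*real k+1) < 2*pi*(real N+1)" using pi_gt_zero by simp
    then show ?thesis by (simp add: divide_simps)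
  qed
  have "pi*(2*real a+1)/(real N+1) = pi*(2*real b+1)/(real N+1)"
    using e a b bd[of a] bd[of b] unfolding om_def
    by (intro cis_inj) auto
  then show "a = b" using pi_gt_zero by (simp add: divide_simps)
qed


lemma lin_root: "poly [:-a,1:] (a::complex) = 0" by simp

lemma QQ_root:
  assumes "j \<in> {1..(N-1) div 2}" "x = cis (psi 1 N j) \<or> x = cis (- psi 1 N j)"
  shows "poly (QQ N) x = 0"
proof -
  have "(\<Prod>j\<in>{1..(N-1) div 2}. poly ([:- cis (psi 1 N j), 1:] * [:- cis (- psi 1 N j), 1:]) x) = 0"
    apply (rule prod_zero, simp)
    apply (rule bexI[of _ j])
    using assms(2) apply (auto simp only: poly_mult lin_root mult_zero_left mult_zero_right)[1]
    using assms(1) by simp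
  then show ?thesis unfolding QQ_def by (simp add: poly_prod)
qed

lemma roots:
  assumes N: "N \<ge> 1" and k: "k < N+1"
  shows "poly (QQ N * DD N) (om N k) = 0"
proof -
  consider "k = 0" | "k = N" | "1 \<le> k" "2*k < N" | "N < 2*k" "k < N" | "2*k = N" using k by linarith
  then show ?thesis
  proof cases
    case 1
    then have "om N k = cis (th N)" unfolding om_def th_def by simp
    then show ?thesis unfolding DD_def by (simp only: poly_mult lin_root mult_zero_left mult_zero_right)
  next
    case 2
    have "pi*(2*real k+1)/(real N+1) = 2*pi*real (1::nat) + (- th N)"
      unfolding th_def 2 by (simp add: field_simps)
    then have "om N k = cis (- th N)" unfolding om_def by (simp only: cis_shift)
    then show ?thesis unfolding DD_def by (simp only: poly_mult lin_root mult_zero_left mult_zero_right)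
  next
    case 3
    have "om N k = cis (psi 1 N k)" unfolding om_def psi1 ..
    moreover have "k \<in> {1..(N-1) div 2}" using 3 by auto
    ultimately show ?thesis using QQ_root by simp
  next
    case 4
    define j where "j = N - k"
    have j: "j \<in> {1..(N-1) div 2}" using 4 unfolding j_def by auto
    have "pi*(2*real k+1)/(real N+1) = 2*pi*real (1::nat) + (- psi 1 N j)"
      unfolding psi1 j_def using 4 by (simp add: field_simps of_nat_diff)
    then have "om N k = cis (- psi 1 N j)" unfolding om_def by (simp only: cis_shift)
    then show ?thesis using QQ_root[OF j] by simp
  next
    case 5
    then have ev: "even N" by auto
    have "pi*(2*real k+1)/(real N+1) = pi"
    proof -
      have "2*real k = real N" using 5 by (metis of_nat_mult of_nat_numeral)
      then show ?thesis by (simp add: field_simps)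
    qed
    then have "om N k = -1" unfolding om_def by simp
    then show ?thesis using ev unfolding QQ_def by simp
  qed
qed


lemma quad_props:
  fixes a b :: complex
  shows "degree ([:-a,1:]*[:-b,1:]) = 2" "lead_coeff ([:-a,1:]*[:-b,1:]) = 1"
    "[:-a,1:]*[:-b,1:] \<noteq> 0"
proof -
  have nz: "[:-a,1:] \<noteq> 0" "[:-b,1:] \<noteq> 0" by auto
  show "degree ([:-a,1:]*[:-b,1:]) = 2" using degree_mult_eq[OF nz] by simp
  show "lead_coeff ([:-a,1:]*[:-b,1:]) = 1" by (simp add: lead_coeff_mult)
  show "[:-a,1:]*[:-b,1:] \<noteq> 0" using nz by simp
qed

lemma QQDD_deg: assumes N: "N \<ge> 1"
  shows "degree (QQ N * DD N) = N + 1" "lead_coeff (QQ N * DD N) = 1"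
proof -
  define F where "F j = [:- cis (psi 1 N j), 1:] * [:- cis (- psi 1 N j), 1:]" for j
  define c :: "complex poly" where "c = (if even N then [:1,1:] else 1)"
  have Q: "QQ N = c * prod F {1..(N-1) div 2}" unfolding QQ_def F_def c_def by simp
  have Fnz: "\<forall>j\<in>{1..(N-1) div 2}. F j \<noteq> 0" unfolding F_def using quad_props by auto
  have dP: "degree (prod F {1..(N-1) div 2}) = 2 * ((N-1) div 2)"
    using degree_prod_eq_sum_degree[OF Fnz] unfolding F_def by (simp add: quad_props)
  have lP: "lead_coeff (prod F {1..(N-1) div 2}) = 1"
    unfolding lead_coeff_prod F_def by (simp add: quad_props)
  then have Pnz: "prod F {1..(N-1) div 2} \<noteq> 0" by (metis coeff_0 zero_neq_one)
  have cnz: "c \<noteq> 0" unfolding c_def by simp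
  have dc: "degree c = (if even N then 1 else 0)" unfolding c_def by simp
  have lc: "lead_coeff c = 1" unfolding c_def by simp
  have Dnz: "DD N \<noteq> 0" and dD: "degree (DD N) = 2" and lD: "lead_coeff (DD N) = 1"
    unfolding DD_def using quad_props by auto
  have Qnz: "QQ N \<noteq> 0" unfolding Q using cnz Pnz by simp
  have "degree (QQ N * DD N) = degree c + 2 * ((N-1) div 2) + 2"
    using degree_mult_eq[OF Qnz Dnz] degree_mult_eq[OF cnz Pnz] dP dD unfolding Q by simp
  also have "\<dots> = N + 1" using N unfolding dc by presburger
  finally show "degree (QQ N * DD N) = N + 1" .
  show "lead_coeff (QQ N * DD N) = 1" unfolding Q lead_coeff_mult lc lP lD by simp
qed

lemma QQDD: assumes N: "N \<ge> 1" shows "QQ N * DD N = monom 1 (N+1) + 1"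
proof (rule poly_eqI_degree_lead_coeff[where n = "N+1" and A = "om N ` {..<N+1}"])
  show "coeff (QQ N * DD N) (N + 1) = coeff (monom 1 (N + 1) + 1) (N + 1)"
    using QQDD_deg[OF N] by (simp add: coeff_monom)
  show "N + 1 \<le> card (om N ` {..<N + 1})" using card_image[OF om_inj[of N]] by simp
  show "degree (QQ N * DD N) \<le> N + 1" using QQDD_deg[OF N] by simp
  show "degree (monom (1::complex) (N + 1) + 1) \<le> N + 1"
    by (rule order.trans[OF degree_add_le_max]) (simp add: degree_monom_le)
  fix z assume "z \<in> om N ` {..<N + 1}"
  then obtain k where k: "k < N+1" "z = om N k" by auto
  show "poly (QQ N * DD N) z = poly (monom 1 (N + 1) + 1) z"
    using roots[OF N k(1)] om_pow[of N k] k(2) by (simp add: poly_monom)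
qed

lemma QQ_PP: assumes N: "N \<ge> 1" shows "QQ N = PP N"
proof -
  have "DD N \<noteq> 0" unfolding DD_def using quad_props by auto
  moreover have "QQ N * DD N = PP N * DD N" using QQDD[OF N] DD_PP[OF N] by (simp add: mult.commute)
  ultimately show ?thesis by simp
qed


lemma qb_eq: "q_bracket 1 N = smult (complex_of_real (1 + real N)) (PP N) - (PP N + [:0,1:] * pderiv (PP N))"
  if N: "N \<ge> 1"
proof -
  have e: "eta_poly 1 N = [:0,1:] * PP N" using eta_eq QQ_PP[OF N] by simp
  have nz: "[:0,1:] \<noteq> (0::complex poly)" by simp
  have d: "eta_poly 1 N div [:0,1:] = PP N" unfolding e by (rule nonzero_mult_div_cancel_left[OF nz])
  have p: "pderiv (eta_poly 1 N) = PP N + [:0,1:] * pderiv (PP N)"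
    unfolding e pderiv_mult by (simp add: pderiv_pCons)
  show ?thesis unfolding q_bracket_def d p by simp
qed

lemma pderiv_PP: "pderiv (PP N) = (\<Sum>k<N. monom (of_nat k * uu N k) (k-1))"
  unfolding PP_def using higher_pderiv_sum[of 1 "\<lambda>k. monom (uu N k) k" "{..<N}"]
  by (simp add: pderiv_monom)

lemma poly_qb: assumes N: "N \<ge> 1"
  shows "poly (q_bracket 1 N) z = (\<Sum>k<N. of_nat (N - k) * uu N k * z^k)"
proof -
  have a: "z * poly (pderiv (PP N)) z = (\<Sum>k<N. of_nat k * uu N k * z^k)"
    unfolding pderiv_PP poly_sum sum_distrib_left
  proof (rule sum.cong[OF refl])
    fix k show "z * poly (monom (of_nat k * uu N k) (k - 1)) z = of_nat k * uu N k * z ^ k"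
      by (cases k) (auto simp: poly_monom)
  qed
  have "poly (q_bracket 1 N) z = of_nat N * poly (PP N) z - z * poly (pderiv (PP N)) z"
    unfolding qb_eq[OF N] by (simp add: algebra_simps)
  also have "\<dots> = (\<Sum>k<N. of_nat N * uu N k * z^k) - (\<Sum>k<N. of_nat k * uu N k * z^k)"
    unfolding a poly_PP sum_distrib_left by (simp add: mult.assoc)
  also have "\<dots> = (\<Sum>k<N. of_nat (N - k) * uu N k * z^k)"
    unfolding sum_subtractf[symmetric]
    by (rule sum.cong[OF refl]) (auto simp: of_nat_diff algebra_simps)
  finally show ?thesis .
qed

lemma poly_dDD: "poly (pderiv (DD N)) z = 2 * z - 2 * complex_of_real (cos (th N))"
proof -
  have a: "cis (th N) + cis (- th N) = 2 * complex_of_real (cos (th N))"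
    by (simp add: complex_eq_iff)
  show ?thesis unfolding DD_def pderiv_mult using a by (simp add: pderiv_pCons algebra_simps)
qed


lemma vals: assumes N: "N \<ge> 1"
  shows "(2 - 2 * complex_of_real (cos (th N))) * poly (q_bracket 1 N) 1 = of_nat (N+1)"
    "(2 + 2 * complex_of_real (cos (th N))) * poly (q_bracket 1 N) (-1) = of_nat (N+1)"
proof -
  define c where "c = complex_of_real (cos (th N))"
  have E: "poly (DD N) x * poly (PP N) x = x^(N+1) + 1" for x
    using arg_cong[OF DD_PP[OF N], of "\<lambda>p. poly p x"] by (simp add: poly_monom)
  have dE: "poly (DD N) x * poly (pderiv (PP N)) x + poly (PP N) x * (2*x - 2*c) = of_nat (N+1) * x^N" for x
    using arg_cong[OF DD_PP[OF N], of "\<lambda>p. poly (pderiv p) x"]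
    by (simp add: pderiv_mult pderiv_add pderiv_monom poly_monom poly_dDD c_def algebra_simps)
  have qb: "poly (q_bracket 1 N) x = of_nat N * poly (PP N) x - x * poly (pderiv (PP N)) x" for x
    unfolding qb_eq[OF N] by (simp add: algebra_simps)
  have D1: "poly (DD N) 1 = 2 - 2*c" unfolding poly_DD c_def by simp
  have Dm: "poly (DD N) (-1) = 2 + 2*c" unfolding poly_DD c_def by simp
  have e1: "(2-2*c) * poly (PP N) 1 = 2" using E[of 1] D1 by simp
  have e2: "(2-2*c) * poly (pderiv (PP N)) 1 + poly (PP N) 1 * (2 - 2*c) = of_nat (N+1)"
    using dE[of 1] D1 by simp
  show "(2 - 2 * complex_of_real (cos (th N))) * poly (q_bracket 1 N) 1 = of_nat (N+1)"
    unfolding c_def[symmetric] qb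
  proof -
    have "(2 - 2 * c) * (of_nat N * poly (PP N) 1 - 1 * poly (pderiv (PP N)) 1)
      = of_nat N * ((2-2*c) * poly (PP N) 1) - ((2-2*c) * poly (pderiv (PP N)) 1)"
      by (simp add: algebra_simps)
    also have "\<dots> = of_nat N * 2 - (of_nat (N+1) - 2)"
    proof -
      have "(2-2*c) * poly (pderiv (PP N)) 1 + 2 = of_nat (N+1)"
        using e2 e1 by (simp only: mult.commute[of "poly (PP N) 1"])
      then have "(2-2*c) * poly (pderiv (PP N)) 1 + 2 = of_nat N + 1" by simp
      then have "(2-2*c) * poly (pderiv (PP N)) 1 = of_nat (N+1) - 2" by (simp add: eq_diff_eq add.commute)
      then show ?thesis using e1 by simp
    qed
    also have "\<dots> = of_nat (N+1)" by simp
    finally show "(2 - 2 * c) * (of_nat N * poly (PP N) 1 - 1 * poly (pderiv (PP N)) 1) = of_nat (N+1)" .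
  qed
  have sgn: "(-1::complex)^(N+1) + (-1)^N = 0" by simp
  have e3: "(2+2*c) * poly (PP N) (-1) = (-1)^(N+1) + 1" using E[of "-1"] Dm by simp
  have e4: "(2+2*c) * poly (pderiv (PP N)) (-1) - (2+2*c) * poly (PP N) (-1) = of_nat (N+1) * (-1)^N"
    using dE[of "-1"] Dm by (simp add: algebra_simps)
  show "(2 + 2 * complex_of_real (cos (th N))) * poly (q_bracket 1 N) (-1) = of_nat (N+1)"
    unfolding c_def[symmetric] qb
  proof -
    have "(2 + 2 * c) * (of_nat N * poly (PP N) (- 1) - - 1 * poly (pderiv (PP N)) (- 1))
      = of_nat N * ((2+2*c) * poly (PP N) (-1)) + ((2+2*c) * poly (pderiv (PP N)) (-1))"
      by (simp add: algebra_simps)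
    also have "\<dots> = of_nat N * ((-1)^(N+1) + 1) + (of_nat (N+1) * (-1)^N + ((-1)^(N+1) + 1))"
    proof -
      have "(2+2*c) * poly (pderiv (PP N)) (-1) = of_nat (N+1) * (-1)^N + (2+2*c) * poly (PP N) (-1)"
        using e4 by (simp add: algebra_simps)
      then show ?thesis unfolding e3 by simp
    qed
    also have "\<dots> = of_nat (N+1) * ((-1)^(N+1) + (-1)^N) + of_nat (N+1)"
      by (simp add: algebra_simps)
    also have "\<dots> = of_nat (N+1)" using sgn by simp
    finally show "(2 + 2 * c) * (of_nat N * poly (PP N) (- 1) - - 1 * poly (pderiv (PP N)) (- 1)) = of_nat (N+1)" .
  qed
qed


lemma trig: assumes N: "N \<ge> 1"
  shows "2 - 2 * cos (th N) = 2 * tan (th N / 2) * sin (th N)"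
    "2 - 2 * cos (th N) = (tan (th N / 2))^2 * (2 + 2 * cos (th N))"
proof -
  define h where "h = th N / 2"
  have th: "th N = 2 * h" unfolding h_def by simp
  have "0 < h" "h < pi/2" using th_bounds[OF N] pi_gt_zero unfolding h_def by auto
  then have ch: "cos h > 0" by (intro cos_gt_zero) auto
  have c1: "cos (th N) = 1 - 2 * sin h ^ 2" unfolding th by (rule cos_double_sin)
  have c2: "cos (th N) = 2 * cos h ^ 2 - 1" unfolding th by (rule cos_double_cos)
  have s: "sin (th N) = 2 * sin h * cos h" unfolding th by (rule sin_double)
  show "2 - 2 * cos (th N) = 2 * tan (th N / 2) * sin (th N)"
    unfolding h_def[symmetric] tan_def s c1 using ch by (simp add: field_simps power2_eq_square)
  show "2 - 2 * cos (th N) = (tan (th N / 2))^2 * (2 + 2 * cos (th N))"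
    unfolding h_def[symmetric] tan_def
    apply (subst (2) c2) apply (subst c1) using ch by (simp add: field_simps power2_eq_square)
qed

lemma poly_q: assumes N: "N \<ge> 1"
  shows "poly (q_poly 1 N) z = poly (q_bracket 1 N) z * (2 - 2 * complex_of_real (cos (th N))) / of_nat (N+1)"
proof -
  have cne: "2 - 2 * complex_of_real (cos (th N)) \<noteq> 0"
  proof
    assume "2 - 2 * complex_of_real (cos (th N)) = 0"
    then have "complex_of_real (2 - 2 * cos (th N)) = 0" by simp
    then show False using cos_th_lt1[OF N] by simp
  qed
  have q1: "poly (q_bracket 1 N) 1 = of_nat (N+1) / (2 - 2 * complex_of_real (cos (th N)))"
    using vals(1)[OF N] cne by (simp add: field_simps)
  have r: "2 + (real N - 1) * real (1::nat) = real N + 1" using N by simp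
  have "poly (q_poly 1 N) z = poly (q_bracket 1 N) z / poly (q_bracket 1 N) 1"
  proof -
    have nz: "1 + complex_of_nat N \<noteq> 0" by (metis of_nat_Suc of_nat_eq_0_iff nat.distinct(1))
    show ?thesis unfolding q_poly_def K_const_def r using nz by (simp add: field_simps)
  qed
  then show ?thesis unfolding q1 using cne by (simp add: field_simps)
qed


lemma aux_field:
  fixes s S t n m :: real
  assumes "s \<noteq> 0" "n + 1 \<noteq> 0"
  shows "(n + 1 - m) * (S / s) * (2 * t * s) / (n + 1) = 2 * t * ((1 - m / (n + 1)) * S)"
proof -
  have e0: "S / s * s = S" using assms(1) by simp
  have e: "(S / s) * (2 * t * s) = 2 * t * S"
  proof -
    have "(S / s) * (2 * t * s) = 2 * t * (S / s * s)" by (simp only: mult_ac)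
    then show ?thesis using e0 by simp
  qed
  have f: "1 - m / (n + 1) = (n + 1 - m) / (n + 1)" using assms(2) by (simp add: diff_divide_distrib)
  have "(n + 1 - m) * (S / s) * (2 * t * s) / (n + 1) = (n + 1 - m) * ((S / s) * (2 * t * s)) / (n + 1)" by (simp only: mult.assoc)
  also have "\<dots> = (n + 1 - m) * (2 * t * S) / (n + 1)" by (simp only: e)
  also have "\<dots> = 2 * t * ((n + 1 - m) / (n + 1) * S)" by (simp add: algebra_simps)
  finally show ?thesis unfolding f .
qed

theorem mainTheorem4:
  fixes N :: nat
  assumes "N \<ge> 1"
  shows "(\<forall>z::complex. poly (q_poly 1 N) z =
            complex_of_real (2 * tan (pi / (2 * (real N + 1)))) *
            (\<Sum>j=1..N. complex_of_real ((1 - real j / (real N + 1)) * sin (pi * real j / (real N + 1)))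
                        * z ^ (j - 1)))
         \<and> poly (q_poly 1 N) (-1) = complex_of_real ((tan (pi / (2 * (real N + 1)))) ^ 2)"
proof -
  have N: "N \<ge> 1" by fact
  have h: "pi / (2 * (real N + 1)) = th N / 2" unfolding th_def by simp
  define t where "t = tan (th N / 2)"
  have sp: "sin (th N) > 0" using sin_th_pos[OF N] .
  have part1: "poly (q_poly 1 N) z =
            complex_of_real (2 * tan (pi / (2 * (real N + 1)))) *
            (\<Sum>j=1..N. complex_of_real ((1 - real j / (real N + 1)) * sin (pi * real j / (real N + 1)))
                        * z ^ (j - 1))" for z
  proof -
    have "poly (q_poly 1 N) z = (\<Sum>k<N. of_nat (N - k) * uu N k * z^k) * (2 - 2 * complex_of_real (cos (th N))) / of_nat (N+1)"
      unfolding poly_q[OF N] poly_qb[OF N] ..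
    also have "\<dots> = (\<Sum>k<N. complex_of_real (real (N - k) * (sin (real (Suc k) * th N) / sin (th N)) * (2 - 2 * cos (th N)) / real (N+1)) * z^k)"
      unfolding sum_divide_distrib sum_distrib_right
      by (rule sum.cong[OF refl]) (simp add: uu_def)
    also have "\<dots> = (\<Sum>k<N. complex_of_real (2 * t) * (complex_of_real ((1 - real (Suc k) / (real N + 1)) * sin (pi * real (Suc k) / (real N + 1))) * z ^ k))"
    proof (rule sum.cong[OF refl])
      fix k assume k: "k \<in> {..<N}"
      have a: "pi * real (Suc k) / (real N + 1) = real (Suc k) * th N" unfolding th_def by simp
      have "real (N - k) * (sin (real (Suc k) * th N) / sin (th N)) * (2 - 2 * cos (th N)) / real (N+1)
          = 2 * t * ((1 - real (Suc k) / (real N + 1)) * sin (pi * real (Suc k) / (real N + 1)))"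
      proof -
        have "real (N - k) = real N + 1 - real (Suc k)" using k by (simp add: of_nat_diff)
        then show ?thesis unfolding a trig(1)[OF N] t_def[symmetric]
          using aux_field[of "sin (th N)" "real N" "real (Suc k)" "sin (real (Suc k) * th N)" t] sp
          by (simp only: of_nat_Suc[of N]) (simp add: add.commute)
      qed
      then show "complex_of_real (real (N - k) * (sin (real (Suc k) * th N) / sin (th N)) * (2 - 2 * cos (th N)) / real (N+1)) * z^k
         = complex_of_real (2 * t) * (complex_of_real ((1 - real (Suc k) / (real N + 1)) * sin (pi * real (Suc k) / (real N + 1))) * z ^ k)"
        by (metis mult.assoc of_real_mult)
    qed
    also have "\<dots> = complex_of_real (2 * t) * (\<Sum>k<N. (\<lambda>j. complex_of_real ((1 - real j / (real N + 1)) * sin (pi * real j / (real N + 1)))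
                        * z ^ (j - 1)) (Suc k))"
      by (simp add: sum_distrib_left)
    also have "(\<Sum>k<N. (\<lambda>j. complex_of_real ((1 - real j / (real N + 1)) * sin (pi * real j / (real N + 1)))
                        * z ^ (j - 1)) (Suc k)) = (\<Sum>j=1..N. complex_of_real ((1 - real j / (real N + 1)) * sin (pi * real j / (real N + 1)))
                        * z ^ (j - 1))"
      using sum.atLeast1_atMost_eq[of "\<lambda>j. complex_of_real ((1 - real j / (real N + 1)) * sin (pi * real j / (real N + 1)))
                        * z ^ (j - 1)" N] by simp
    also have "complex_of_real (2 * t) = complex_of_real (2 * tan (pi / (2 * (real N + 1))))"
      unfolding h t_def ..
    finally show ?thesis .
  qed
  have part2: "poly (q_poly 1 N) (-1) = complex_of_real ((tan (pi / (2 * (real N + 1)))) ^ 2)"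
  proof -
    have cp: "2 + 2 * cos (th N) > 0" using cos_th_pos[OF N] by simp
    have cne: "complex_of_real (2 + 2 * cos (th N)) \<noteq> 0" using cp by (metis of_real_eq_0_iff less_irrefl)
    have "complex_of_real (2 + 2 * cos (th N)) * poly (q_bracket 1 N) (-1) = of_nat (N+1)"
      using vals(2)[OF N] by simp
    then have "poly (q_bracket 1 N) (-1) = of_nat (N+1) / complex_of_real (2 + 2 * cos (th N))"
      using cne by (simp add: eq_divide_eq mult.commute)
    then have "poly (q_poly 1 N) (-1) = (2 - 2 * complex_of_real (cos (th N))) / (2 + 2 * complex_of_real (cos (th N)))"
    proof -
      assume a: "poly (q_bracket 1 N) (-1) = of_nat (N+1) / complex_of_real (2 + 2 * cos (th N))"
      have nzN: "(of_nat (N+1) :: complex) \<noteq> 0" by (simp only: of_nat_eq_0_iff)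
      have c2: "2 + 2 * complex_of_real (cos (th N)) \<noteq> 0" using cne by simp
      have b: "complex_of_real (2 + 2 * cos (th N)) = 2 + 2 * complex_of_real (cos (th N))" by simp
      have g: "\<And>n d e :: complex. n \<noteq> 0 \<Longrightarrow> n / d * e / n = e / d" by (simp add: field_simps)
      show ?thesis unfolding poly_q[OF N] a b by (rule g[OF nzN])
    qed
    also have "\<dots> = complex_of_real ((2 - 2 * cos (th N)) / (2 + 2 * cos (th N)))" by simp
    also have "(2 - 2 * cos (th N)) / (2 + 2 * cos (th N)) = t^2"
      unfolding t_def using trig(2)[OF N] cp by (simp add: field_simps)
    finally show ?thesis unfolding h t_def .
  qed
  show ?thesis using part1 part2 by blast
qed

end
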